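(* Let $k=2\kappa+1$ with $\kappa\in\{0,1,2,\dots\}$, and let $$\psi(x)=\frac{1}{k!}\,\frac{1}{x(1-x)}\,\frac{d^{k-1}}{dx^{k-1}}\Big[x^{k+1}(1-x)^k\Big],\qquad x\in[0,1]$$ (a polynomial of degree $k$). Then (i) $\int_0^1\psi(x)^2\,dx=\frac{1}{k(k+2)}$; (ii) $\int_0^1\psi(x)\psi(1-x)\,dx=\frac{1}{k(k+1)(k+2)}$; (iii) $\int_0^1 x^j\psi(x)\,dx=\frac{1}{k(k+2)}$ for $j=1,2,\dots,k$; (iv) $\int_0^1\psi(x)\,dx=\frac{1}{k(k+1)}$; (v) $\int_0^1(1-x)^j\psi(x)\,dx=\frac{1}{k(k+1)(k+2)}$ for $j=1,2,\dots,k$; (vi) $\psi'(0)=\frac{k+1}{2}$ and $\psi'(1)=\frac{k^2+2k-1}{2}$; (vii) $\int_0^1\psi'(x)\psi(1-x)\,dx=\frac{1}{k+1}$.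
   Context: The expression defining $\psi$ is understood as the polynomial obtained after cancelling the factor $x(1-x)$ (for $k=1$ this gives $\psi(x)=x$). *)

theory Defs
  imports "HOL-Analysis.Analysis" "HOL-Computational_Algebra.Polynomial"
begin

definition base_poly :: "nat \<Rightarrow> real poly" where
  "base_poly k = [:0, 1:] ^ (k + 1) * [:1, -1:] ^ k"

text \<open>psi = (1/k!) * (d/dx)^(k-1) [x^(k+1) (1-x)^k] / (x(1-x)),
  the quotient taken as polynomial division (which is exact).\<close>
definition psi_poly :: "nat \<Rightarrow> real poly" where
  "psi_poly k = smult (1 / fact k)
     (((pderiv ^^ (k - 1)) (base_poly k)) div ([:0, 1:] * [:1, -1:]))"

end

theory Submission imports Defs begin

definition II :: "real poly \<Rightarrow> real" where
  "II p = integral {0..1} (poly p)"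

lemma II_integrable: "(poly p) integrable_on {0..1::real}"
  by (intro integrable_continuous_interval continuous_intros)

lemma II_add: "II (p + q) = II p + II q"
  unfolding II_def poly_add
  by (rule integral_add[OF II_integrable II_integrable])

lemma II_diff: "II (p - q) = II p - II q"
  unfolding II_def poly_diff
  by (rule integral_diff[OF II_integrable II_integrable])

lemma II_smult: "II (smult c p) = c * II p"
  unfolding II_def poly_smult by (rule integral_mult_right)

lemma II_minus: "II (- p) = - II p"
  unfolding II_def poly_minus by (rule integral_neg)

lemma II_pderiv: "II (pderiv r) = poly r 1 - poly r 0"
proof -
  have "(poly (pderiv r) has_integral poly r 1 - poly r 0) {0..1::real}"
    by (intro fundamental_theorem_of_calculus)
       (auto intro!: DERIV_subset[OF poly_DERIV] simp: has_real_derivative_iff_has_vector_derivative[symmetric])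
  then show ?thesis unfolding II_def by (rule integral_unique)
qed

lemma II_parts: "II (p * pderiv q) = poly (p*q) 1 - poly (p*q) 0 - II (pderiv p * q)"
proof -
  have "II (pderiv (p*q)) = II (p * pderiv q) + II (pderiv p * q)"
    by (simp add: pderiv_mult II_add algebra_simps)
  then show ?thesis using II_pderiv[of "p*q"] by simp
qed

lemma pderiv_funpow_zero: "degree p < n \<Longrightarrow> (pderiv ^^ n) (p::real poly) = 0"
proof (induction n arbitrary: p)
  case 0 then show ?case by simp
next
  case (Suc n)
  show ?case
  proof (cases n)
    case 0
    then show ?thesis using Suc.prems by (simp add: pderiv_eq_0_iff)
  next
    case (Suc m)
    have "degree (pderiv p) < n" using Suc.prems Suc by (simp add: degree_pderiv)
    then show ?thesis using Suc.IH by (simp add: funpow_Suc_right del: funpow.simps)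
  qed
qed

abbreviation XX :: "real poly" where "XX \<equiv> [:0, 1:]"
abbreviation YY :: "real poly" where "YY \<equiv> [:1, -1:]"

lemma II_YY_pow: "II (YY ^ n) = 1 / (real n + 1)"
proof -
  have "pderiv (smult (- 1 / (real n + 1)) (YY ^ Suc n)) = YY ^ n"
  proof -
    have "pderiv YY = -1" by (simp add: pderiv_pCons one_pCons)
    then show ?thesis by (simp only: pderiv_smult pderiv_power_Suc) (simp add: field_simps)
  qed
  then have "II (YY ^ n) = II (pderiv (smult (- 1 / (real n + 1)) (YY ^ Suc n)))" by simp
  also have "\<dots> = 1 / (real n + 1)" by (simp add: II_pderiv field_simps)
  finally show ?thesis .
qed

lemma II_XX_pow: "II (XX ^ n) = 1 / (real n + 1)"
proof -
  have "pderiv (smult (1 / (real n + 1)) (XX ^ Suc n)) = XX ^ n"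
  proof -
    have "pderiv XX = 1" by (simp add: pderiv_pCons)
    then show ?thesis by (simp only: pderiv_smult pderiv_power_Suc) (simp add: field_simps)
  qed
  then have "II (XX ^ n) = II (pderiv (smult (1 / (real n + 1)) (XX ^ Suc n)))" by simp
  also have "\<dots> = 1 / (real n + 1)" by (simp add: II_pderiv field_simps)
  finally show ?thesis .
qed

fun gg :: "nat \<Rightarrow> nat \<Rightarrow> real poly" where
  "gg k 0 = 1"
| "gg k (Suc i) = smult (real (k + 1 - i)) (YY * gg k i) - smult (real (k - i)) (XX * gg k i)
     + XX * YY * pderiv (gg k i)"

lemma pderiv_XX: "pderiv XX = 1" by (simp add: pderiv_pCons)
lemma pderiv_YY: "pderiv YY = -1" by (simp add: pderiv_pCons one_pCons)

lemma pderiv_step_gen: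
  fixes x y g :: "real poly"
  assumes "pderiv x = 1" "pderiv y = -1"
  shows "pderiv (x ^ Suc a * y ^ Suc b * g) =
   x ^ a * y ^ b * (smult (real (Suc a)) (y * g) - smult (real (Suc b)) (x * g) + x * y * pderiv g)"
  apply (simp only: pderiv_mult pderiv_power_Suc assms)
  apply (simp add: algebra_simps)
  done

lemma pderiv_step:
  "pderiv (XX ^ Suc a * YY ^ Suc b * g) =
   XX ^ a * YY ^ b * (smult (real (Suc a)) (YY * g) - smult (real (Suc b)) (XX * g) + XX * YY * pderiv g)"
  by (rule pderiv_step_gen[OF pderiv_XX pderiv_YY])

lemma base_fact:
  assumes "i \<le> k"
  shows "(pderiv ^^ i) (XX ^ (k+1) * YY ^ k) = XX ^ (k + 1 - i) * YY ^ (k - i) * gg k i"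
  using assms
proof (induction i)
  case 0 then show ?case by simp
next
  case (Suc i)
  then have IH: "(pderiv ^^ i) (XX ^ (k+1) * YY ^ k) = XX ^ Suc (k - i) * YY ^ Suc (k - Suc i) * gg k i"
    by (simp add: Suc_diff_le Suc_diff_Suc)
  have e1: "real (Suc (k - i)) = real (k + 1 - i)" using Suc.prems by simp
  have e2: "real (Suc (k - Suc i)) = real (k - i)" using Suc.prems by simp
  have e3: "k + 1 - Suc i = k - i" by simp
  show ?case using IH
    by (simp only: funpow.simps o_apply pderiv_step e1 e2 e3 gg.simps)
qed

lemma gg_rec0: "poly (gg k (Suc i)) 0 = real (k + 1 - i) * poly (gg k i) 0"
  by simp

lemma gg_rec1: "poly (gg k (Suc i)) 1 = - real (k - i) * poly (gg k i) 1"
  by simp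

lemma gg_recd1: "poly (pderiv (gg k (Suc i))) 1 =
   - (real (k + 1 - i) + real (k - i)) * poly (gg k i) 1 - (real (k - i) + 1) * poly (pderiv (gg k i)) 1"
  by (simp add: pderiv_add pderiv_diff pderiv_smult pderiv_mult pderiv_pCons pderiv_minus algebra_simps)

lemma gg_at0: "i \<le> k \<Longrightarrow> poly (gg k i) 0 = fact (k + 1) / fact (k + 1 - i)"
proof (induction i)
  case 0 then show ?case by simp
next
  case (Suc i)
  define a where "a = real (k + 1 - i)"
  have apos: "a > 0" unfolding a_def using Suc.prems by simp
  have F: "fact (k + 1 - i) = a * fact (k + 1 - Suc i)"
    unfolding a_def using Suc.prems by (metis Suc_diff_le Suc_eq_plus1 diff_Suc_Suc fact_Suc of_nat_fact le_SucI)
  have "poly (gg k (Suc i)) 0 = a * (fact (k + 1) / fact (k + 1 - i))"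
    using Suc by (simp add: gg_rec0 a_def del: gg.simps)
  also have "\<dots> = fact (k + 1) / fact (k + 1 - Suc i)" unfolding F using apos by simp
  finally show ?case .
qed

lemma gg_at1: "i \<le> k \<Longrightarrow> poly (gg k i) 1 = (-1) ^ i * fact k / fact (k - i)"
proof (induction i)
  case 0 then show ?case by simp
next
  case (Suc i)
  define a where "a = real (k - i)"
  have apos: "a > 0" unfolding a_def using Suc.prems by simp
  have F: "fact (k - i) = a * fact (k - Suc i)"
    unfolding a_def using Suc.prems by (metis Suc_diff_Suc Suc_le_lessD fact_Suc of_nat_fact)
  have "poly (gg k (Suc i)) 1 = - a * ((-1) ^ i * fact k / fact (k - i))"
    using Suc by (simp add: gg_rec1 a_def del: gg.simps)
  also have "\<dots> = (-1) ^ Suc i * fact k / fact (k - Suc i)" unfolding F using apos by simp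
  finally show ?case .
qed

lemma gg_d1: "i \<le> k \<Longrightarrow> (real k + 1 - real i) * poly (pderiv (gg k i)) 1 =
   poly (gg k i) 1 * ((real k + 1)^2 - (real k + 1 - real i)^2)"
proof (induction i)
  case 0 then show ?case by simp
next
  case (Suc i)
  define a where "a = real k + 1 - real i"
  define u where "u = poly (gg k i) 1"
  define v where "v = poly (pderiv (gg k i)) 1"
  have IH: "a * v = u * ((real k + 1)^2 - a^2)" using Suc unfolding a_def u_def v_def by simp
  have ra: "real (k + 1 - i) = a" "real (k - i) = a - 1" using Suc.prems unfolding a_def by auto
  have u': "poly (gg k (Suc i)) 1 = - (a - 1) * u" unfolding u_def gg_rec1 ra(2) by simp
  have v': "poly (pderiv (gg k (Suc i))) 1 = - (2 * a - 1) * u - a * v"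
    unfolding u_def v_def gg_recd1 ra by (simp add: algebra_simps)
  have "(a - 1) * poly (pderiv (gg k (Suc i))) 1 = - (a - 1) * (2 * a - 1) * u - (a - 1) * (a * v)"
    unfolding v' by (simp add: algebra_simps)
  also have "\<dots> = poly (gg k (Suc i)) 1 * ((real k + 1)^2 - (a - 1)^2)"
    unfolding IH u' by (simp add: algebra_simps power2_eq_square)
  finally show ?case unfolding a_def by (simp add: algebra_simps)
qed

lemma gg_degree: "degree (gg k i) \<le> i"
proof (induction i)
  case 0 then show ?case by simp
next
  case (Suc i)
  define g where "g = gg k i"
  have dg: "degree g \<le> i" using Suc.IH unfolding g_def .
  have d1: "degree (smult (real (k + 1 - i)) (YY * g)) \<le> Suc i"
    using degree_mult_le[of YY g] dg by simp
  have d2: "degree (smult (real (k - i)) (XX * g)) \<le> Suc i"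
    using degree_mult_le[of XX g] dg by simp
  have d3: "degree (XX * YY * pderiv g) \<le> Suc i"
  proof (cases "degree g = 0")
    case True then show ?thesis by (simp add: pderiv_eq_0_iff[THEN iffD2])
  next
    case False
    have "degree (XX * YY) = 2" by simp
    then have "degree (XX * YY * pderiv g) \<le> 2 + degree (pderiv g)"
      using degree_mult_le[of "XX*YY" "pderiv g"] by simp
    then show ?thesis using False dg by (simp add: degree_pderiv)
  qed
  have "gg k (Suc i) = smult (real (k + 1 - i)) (YY * g) - smult (real (k - i)) (XX * g) + XX * YY * pderiv g"
    unfolding g_def by simp
  then show ?case using d1 d2 d3
    by (metis degree_add_le degree_diff_le)
qed

lemma P_ident:
  fixes x y g :: "real poly"
  assumes "pderiv y = -1"
  shows "x * y ^ c * (smult (real c + 2) (y * g) - smult (real c + 1) (x * g) + x * y * pderiv g)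
     = smult (real c + 2) (x * (y ^ Suc c * g)) + x ^ 2 * pderiv (y ^ Suc c * g)"
  apply (simp only: pderiv_mult pderiv_power_Suc assms)
  apply (simp add: algebra_simps power2_eq_square)
  done

lemma R_ident:
  fixes x y g :: "real poly"
  assumes "pderiv x = 1"
  shows "x ^ Suc c * (smult (real c + 2) (y * g) - smult (real c + 1) (x * g) + x * y * pderiv g)
     = y * pderiv (x ^ Suc (Suc c) * g) - smult (real c + 1) (x ^ Suc (Suc c) * g)"
  apply (simp only: pderiv_mult pderiv_power_Suc assms)
  apply (simp add: algebra_simps)
  done

lemma P_step:
  "II (XX * YY ^ c * (smult (real c + 2) (YY * g) - smult (real c + 1) (XX * g) + XX * YY * pderiv g))
   = real c * II (XX * (YY ^ Suc c * g))"
proof -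
  define H where "H = YY ^ Suc c * g"
  have pX2: "pderiv (XX ^ 2) = smult 2 XX"
    by (simp add: pderiv_power pderiv_XX)
  have "II (XX ^ 2 * pderiv H) = poly (XX^2 * H) 1 - poly (XX^2 * H) 0 - II (pderiv (XX^2) * H)"
    by (rule II_parts)
  also have "\<dots> = - 2 * II (XX * H)"
  proof -
    have "poly (XX^2 * H) 1 = 0" "poly (XX^2 * H) 0 = 0" by (simp_all add: H_def)
    moreover have "pderiv (XX^2) * H = smult 2 (XX * H)" by (simp only: pX2 mult_smult_left)
    ultimately show ?thesis by (simp only: II_smult)
  qed
  finally have e: "II (XX ^ 2 * pderiv H) = - 2 * II (XX * H)" .
  show ?thesis
    unfolding P_ident[OF pderiv_YY] H_def[symmetric] II_add II_smult e
    by (simp add: algebra_simps)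
qed

lemma R_step:
  "II (XX ^ Suc c * (smult (real c + 2) (YY * g) - smult (real c + 1) (XX * g) + XX * YY * pderiv g))
   = - real c * II (XX ^ Suc (Suc c) * g)"
proof -
  define K where "K = XX ^ Suc (Suc c) * g"
  have "II (YY * pderiv K) = poly (YY * K) 1 - poly (YY * K) 0 - II (pderiv YY * K)"
    by (rule II_parts)
  also have "\<dots> = II K"
  proof -
    have "poly (YY * K) 1 = 0" "poly (YY * K) 0 = 0" by (simp_all add: K_def)
    moreover have "pderiv YY * K = - K" by (simp only: pderiv_YY mult_minus_left mult_1_left)
    ultimately show ?thesis by (simp only: II_minus)
  qed
  finally have e: "II (YY * pderiv K) = II K" .
  show ?thesis
    unfolding R_ident[OF pderiv_XX] K_def[symmetric] II_diff II_smult e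
    by (simp add: algebra_simps)
qed

lemma XX_eq: "XX = 1 - YY" by (simp add: one_pCons)

lemma P_val: "i < k \<Longrightarrow> II (XX * (YY ^ (k - i) * gg k i)) =
   fact (k - 1) / fact (k - 1 - i) / ((real k + 1) * (real k + 2))"
proof (induction i)
  case 0
  have "XX * (YY ^ k * 1) = YY ^ k - YY ^ Suc k" by (simp only: XX_eq power_Suc) (simp add: algebra_simps)
  then have "II (XX * (YY ^ k * 1)) = 1 / (real k + 1) - 1 / (real (Suc k) + 1)"
    by (simp only: II_diff II_YY_pow)
  also have "\<dots> = 1 / ((real k + 1) * (real k + 2))" by (simp add: field_simps)
  finally show ?case using 0 by simp
next
  case (Suc i)
  define d where "d = k - Suc (Suc i)"
  define c where "c = Suc d"
  have kc: "k - i = Suc c" "k - Suc i = c" using Suc.prems unfolding c_def d_def by auto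
  have r1: "real (k + 1 - i) = real c + 2" "real (k - i) = real c + 1" using kc by auto
  have "II (XX * (YY ^ (k - Suc i) * gg k (Suc i)))
      = II (XX * YY ^ c * (smult (real c + 2) (YY * gg k i) - smult (real c + 1) (XX * gg k i) + XX * YY * pderiv (gg k i)))"
    by (simp only: gg.simps kc r1 mult.assoc of_nat_Suc add.commute[of 1])
  also have "\<dots> = real c * II (XX * (YY ^ Suc c * gg k i))" by (rule P_step)
  also have "\<dots> = real c * (fact (k - 1) / fact (k - 1 - i) / ((real k + 1) * (real k + 2)))"
    using Suc kc by simp
  also have "\<dots> = fact (k - 1) / fact (k - 1 - Suc i) / ((real k + 1) * (real k + 2))"
  proof -
    have "k - 1 - i = Suc d" "k - 1 - Suc i = d" using kc unfolding c_def by auto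
    moreover have "fact (Suc d) = real (Suc d) * (fact d :: real)" by simp
    moreover have "real (Suc d) > 0" "(fact d :: real) > 0" by auto
    ultimately show ?thesis unfolding c_def by (simp del: fact_Suc of_nat_Suc)
  qed
  finally show ?case .
qed

lemma R_val: "i < k \<Longrightarrow> II (XX ^ (k + 1 - i) * gg k i) =
   (-1) ^ i * fact (k - 1) / fact (k - 1 - i) / (real k + 2)"
proof (induction i)
  case 0
  have "II (XX ^ (k + 1) * 1) = 1 / (real (k + 1) + 1)" by (simp only: mult_1_right II_XX_pow)
  then show ?case using 0 by (simp add: field_simps)
next
  case (Suc i)
  define d where "d = k - Suc (Suc i)"
  define c where "c = Suc d"
  have kc: "k - i = Suc c" "k - Suc i = c" using Suc.prems unfolding c_def d_def by auto
  have r1: "real (k + 1 - i) = real c + 2" "real (k - i) = real c + 1" using kc by auto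
  have kc2: "k + 1 - Suc i = Suc c" "k + 1 - i = Suc (Suc c)" using kc by auto
  have "II (XX ^ (k + 1 - Suc i) * gg k (Suc i))
      = II (XX ^ Suc c * (smult (real c + 2) (YY * gg k i) - smult (real c + 1) (XX * gg k i) + XX * YY * pderiv (gg k i)))"
  proof -
    have "real (Suc (Suc c)) = real c + 2" by simp
    then show ?thesis by (simp only: gg.simps r1 kc2)
  qed
  also have "\<dots> = - real c * II (XX ^ Suc (Suc c) * gg k i)" by (rule R_step)
  also have "\<dots> = - real c * ((-1) ^ i * fact (k - 1) / fact (k - 1 - i) / (real k + 2))"
    using Suc kc2 by simp
  also have "\<dots> = (-1) ^ Suc i * fact (k - 1) / fact (k - 1 - Suc i) / (real k + 2)"
  proof -
    have "k - 1 - i = Suc d" "k - 1 - Suc i = d" using kc unfolding c_def by auto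
    moreover have "fact (Suc d) = real (Suc d) * (fact d :: real)" by simp
    moreover have "real (Suc d) > 0" "(fact d :: real) > 0" by auto
    ultimately show ?thesis unfolding c_def by (simp del: fact_Suc of_nat_Suc)
  qed
  finally show ?case .
qed

lemma base_vanish:
  assumes "i < k"
  shows "poly ((pderiv ^^ i) (XX ^ (k+1) * YY ^ k)) 0 = 0"
        "poly ((pderiv ^^ i) (XX ^ (k+1) * YY ^ k)) 1 = 0"
proof -
  have e: "(pderiv ^^ i) (XX ^ (k+1) * YY ^ k) = XX ^ Suc (k - i) * YY ^ Suc (k - Suc i) * gg k i"
    using base_fact[of i k] assms by (simp add: Suc_diff_le Suc_diff_Suc)
  show "poly ((pderiv ^^ i) (XX ^ (k+1) * YY ^ k)) 0 = 0"
       "poly ((pderiv ^^ i) (XX ^ (k+1) * YY ^ k)) 1 = 0"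
    unfolding e by simp_all
qed

lemma ortho_gen:
  "i \<le> k \<Longrightarrow> II (p * (pderiv ^^ i) (XX ^ (k+1) * YY ^ k)) =
      (-1) ^ i * II ((pderiv ^^ i) p * (XX ^ (k+1) * YY ^ k))"
proof (induction i arbitrary: p)
  case 0 then show ?case by simp
next
  case (Suc i)
  define F where "F = (pderiv ^^ i) (XX ^ (k+1) * YY ^ k)"
  have v: "poly F 0 = 0" "poly F 1 = 0" using base_vanish[of i k] Suc.prems unfolding F_def by auto
  have "II (p * (pderiv ^^ Suc i) (XX ^ (k+1) * YY ^ k)) = II (p * pderiv F)"
    unfolding F_def by simp
  also have "\<dots> = - II (pderiv p * F)"
    using II_parts[of p F] v by simp
  also have "\<dots> = - ((-1) ^ i * II ((pderiv ^^ i) (pderiv p) * (XX ^ (k+1) * YY ^ k)))"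
    unfolding F_def using Suc by simp
  also have "\<dots> = (-1) ^ Suc i * II ((pderiv ^^ Suc i) p * (XX ^ (k+1) * YY ^ k))"
    by (simp only: funpow_Suc_right o_apply) simp
  finally show ?case .
qed

lemma ortho:
  assumes "degree r + 2 \<le> k"
  shows "II (r * (pderiv ^^ (k - 1)) (XX ^ (k+1) * YY ^ k)) = 0"
proof -
  have "(pderiv ^^ (k - 1)) r = 0" using assms by (intro pderiv_funpow_zero) simp
  moreover have "II 0 = 0" using II_smult[of 0 0] by simp
  ultimately show ?thesis using ortho_gen[of "k - 1" k r] by simp
qed

lemma II_zero: "II 0 = 0" using II_smult[of 0 0] by simp

lemma main_G:
  fixes p :: "real poly" and k :: nat and c0 c1 :: real
  assumes k1: "k \<ge> 1"
    and orth: "\<And>r. degree r + 2 \<le> k \<Longrightarrow> II (r * (XX * YY * p)) = 0"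
    and c0: "II p = c0" and c1: "II (XX * p) = c1"
    and dq: "degree q \<le> k"
  shows "II (q * p) = poly q 0 * (c0 - c1) + poly q 1 * c1"
proof -
  define q' where "q' = q - smult (poly q 0) YY - smult (poly q 1) XX"
  have q'0: "poly q' 0 = 0" and q'1: "poly q' 1 = 0" unfolding q'_def by simp_all
  obtain q1 where q1: "q' = XX * q1"
    using q'0 by (metis poly_eq_0_iff_dvd dvdE minus_zero)
  have "poly q1 1 = 0" using q'1 unfolding q1 by simp
  then obtain r1 where r1: "q1 = [:-1, 1:] * r1"
    by (metis poly_eq_0_iff_dvd dvdE)
  define r where "r = - r1"
  have qr: "q' = r * (XX * YY)" unfolding q1 r1 r_def by (simp add: algebra_simps)
  have Iq: "II (q' * p) = 0"
  proof (cases "r = 0")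
    case True then show ?thesis using qr II_zero by simp
  next
    case False
    have a1: "degree (smult (poly q 0) YY) \<le> k"
      using degree_smult_le[of "poly q 0" YY] k1 by simp
    have a2: "degree (smult (poly q 1) XX) \<le> k"
      using degree_smult_le[of "poly q 1" XX] k1 by simp
    have dq': "degree q' \<le> k" unfolding q'_def
      by (intro degree_diff_le dq a1 a2)
    have nz: "XX * YY \<noteq> 0" by simp
    have d2: "degree (XX * YY) = 2" by simp
    have "degree q' = degree r + degree (XX * YY)"
      unfolding qr using False nz by (rule degree_mult_eq)
    then have "degree r + 2 \<le> k" using dq' by simp
    then show ?thesis using orth[of r] qr by (simp add: algebra_simps)
  qed
  obtain a0 a1 where a01: "a0 = poly q 0" "a1 = poly q 1" by blast
  have qq: "q = q' + smult a0 YY + smult a1 XX" unfolding q'_def a01 by simp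
  have "q * p = q' * p + smult a0 (YY * p) + smult a1 (XX * p)"
    unfolding qq by (simp only: distrib_right mult_smult_left)
  then have "q * p = q' * p + smult (poly q 0) (YY * p) + smult (poly q 1) (XX * p)"
    unfolding a01 .
  then have "II (q * p) = poly q 0 * II (YY * p) + poly q 1 * c1"
    by (simp only: II_add II_smult Iq c1)
  moreover have "II (YY * p) = c0 - c1"
  proof -
    have "YY * p = p - XX * p" by (simp add: XX_eq algebra_simps)
    then show ?thesis using c0 c1 by (simp only: II_diff)
  qed
  ultimately show ?thesis by simp
qed

lemma alg_c0:
  fixes F K :: real assumes "F > 0" "K > 0"
  shows "1 / (K * F) * (F / ((K + 1) * (K + 2)) + F / (K + 2)) = 1 / (K * (K + 1))"
proof -
  have a: "K + 1 > 0" "K + 2 > 0" using assms by auto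
  have "F / ((K + 1) * (K + 2)) + F / (K + 2) = F / (K + 1)"
    using a by (simp add: divide_simps) (simp add: algebra_simps)
  then show ?thesis using assms by simp
qed

lemma alg_c1:
  fixes F K :: real assumes "F > 0" "K > 0"
  shows "1 / (K * F) * (F / (K + 2)) = 1 / (K * (K + 2))"
  using assms by simp

theorem lemma2p2:
  fixes \<kappa> k :: nat and \<psi> :: "real \<Rightarrow> real"
  assumes hk: "k = 2 * \<kappa> + 1"
    and hpsi: "\<psi> = poly (psi_poly k)"
  shows "integral {0..1} (\<lambda>x. \<psi> x ^ 2) = 1 / (real k * (real k + 2))
    \<and> integral {0..1} (\<lambda>x. \<psi> x * \<psi> (1 - x)) = 1 / (real k * (real k + 1) * (real k + 2))
    \<and> (\<forall>j\<in>{1..k}. integral {0..1} (\<lambda>x. x ^ j * \<psi> x) = 1 / (real k * (real k + 2)))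
    \<and> integral {0..1} \<psi> = 1 / (real k * (real k + 1))
    \<and> (\<forall>j\<in>{1..k}. integral {0..1} (\<lambda>x. (1 - x) ^ j * \<psi> x) = 1 / (real k * (real k + 1) * (real k + 2)))
    \<and> poly (pderiv (psi_poly k)) 0 = (real k + 1) / 2
    \<and> poly (pderiv (psi_poly k)) 1 = ((real k)^2 + 2 * real k - 1) / 2
    \<and> integral {0..1} (\<lambda>x. poly (pderiv (psi_poly k)) x * \<psi> (1 - x)) = 1 / (real k + 1)"
proof -
  have k1: "k \<ge> 1" using hk by simp
  have ev: "(-1::real) ^ (k - 1) = 1" using hk by simp
  define g where "g = gg k (k - 1)"
  define B where "B = XX ^ (k + 1) * YY ^ k"
  have Bdef: "base_poly k = B" unfolding base_poly_def B_def by simp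
  have kk: "k + 1 - (k - 1) = 2" "k - (k - 1) = 1" using k1 by auto
  have D: "(pderiv ^^ (k - 1)) B = XX * YY * (XX * g)"
    using base_fact[of "k - 1" k] unfolding B_def g_def kk
    by (simp add: power2_eq_square algebra_simps)
  have psi: "psi_poly k = smult (1 / fact k) (XX * g)"
  proof -
    have nz: "XX * YY \<noteq> 0" by simp
    have "(XX * YY * (XX * g)) div (XX * YY) = XX * g"
      using nz by (rule nonzero_mult_div_cancel_left)
    then show ?thesis unfolding psi_poly_def Bdef D by simp
  qed
  define p where "p = psi_poly k"
  have fk: "(fact k :: real) = real k * fact (k - 1)" using k1 by (simp add: fact_reduce)
  have fk1: "(fact (k + 1) :: real) = (real k + 1) * fact k" by simp
  have fpos: "(fact k :: real) > 0" "(fact (k - 1) :: real) > 0" by auto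
  have g0: "poly g 0 = fact (k + 1) / 2"
    using gg_at0[of "k - 1" k] unfolding g_def kk by simp
  have g1: "poly g 1 = fact k"
    using gg_at1[of "k - 1" k] unfolding g_def kk ev by simp
  have gd1: "poly (pderiv g) 1 = fact k * ((real k + 1)^2 - 4) / 2"
  proof -
    have "real k + 1 - real (k - 1) = 2" using k1 by (simp add: of_nat_diff)
    then have "2 * poly (pderiv g) 1 = poly g 1 * ((real k + 1)^2 - 2^2)"
      using gg_d1[of "k - 1" k] unfolding g_def by simp
    then show ?thesis unfolding g1 by simp
  qed
  have p0: "poly p 0 = 0" unfolding p_def psi by simp
  have p1: "poly p 1 = 1" unfolding p_def psi using g1 fpos by simp
  have pd: "pderiv p = smult (1 / fact k) (g + XX * pderiv g)"
    unfolding p_def psi by (simp only: pderiv_smult pderiv_mult pderiv_XX) (simp add: algebra_simps)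
  have pd0: "poly (pderiv p) 0 = (real k + 1) / 2"
    unfolding pd using g0 fk1 fpos by simp
  have pd1: "poly (pderiv p) 1 = ((real k)^2 + 2 * real k - 1) / 2"
    unfolding pd using g1 gd1 fpos by (simp add: field_simps power2_eq_square)
  have Pv: "II (XX * (YY * g)) = fact (k - 1) / ((real k + 1) * (real k + 2))"
    using P_val[of "k - 1" k] k1 unfolding g_def kk by simp
  have Rv: "II (XX ^ 2 * g) = fact (k - 1) / (real k + 2)"
    using R_val[of "k - 1" k] k1 unfolding g_def kk ev by simp
  define c0 where "c0 = 1 / (real k * (real k + 1))"
  define c1 where "c1 = 1 / (real k * (real k + 2))"
  have C0: "II p = c0"
  proof -
    have e: "YY + XX = 1" by (simp add: one_pCons)
    have "XX * (YY * g) + XX ^ 2 * g = XX * ((YY + XX) * g)"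
      by (simp only: power2_eq_square algebra_simps)
    then have "XX * g = XX * (YY * g) + XX ^ 2 * g" unfolding e by simp
    then have "II p = (1 / fact k) * (II (XX * (YY * g)) + II (XX ^ 2 * g))"
      unfolding p_def psi by (simp add: II_smult II_add)
    also have "\<dots> = c0" unfolding Pv Rv c0_def fk using k1 fpos by (intro alg_c0) auto
    finally show ?thesis .
  qed
  have C1: "II (XX * p) = c1"
  proof -
    have "XX * p = smult (1 / fact k) (XX ^ 2 * g)"
      unfolding p_def psi by (simp only: mult_smult_right power2_eq_square mult.assoc)
    then have "II (XX * p) = (1 / fact k) * II (XX ^ 2 * g)"
      by (simp only: II_smult)
    also have "\<dots> = c1" unfolding Rv c1_def fk using k1 fpos by (intro alg_c1) auto
    finally show ?thesis .
  qed
  have degp: "degree p \<le> k"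
  proof -
    have "degree (XX * g) \<le> 1 + (k - 1)"
      using degree_mult_le[of XX g] gg_degree[of k "k - 1"] unfolding g_def by simp
    then have "degree (XX * g) \<le> k" using k1 by simp
    then show ?thesis unfolding p_def psi using degree_smult_le[of "1 / fact k" "XX * g"] by linarith
  qed
  have orth: "II (r * (XX * YY * p)) = 0" if "degree r + 2 \<le> k" for r
  proof -
    have "XX * YY * p = smult (1 / fact k) ((pderiv ^^ (k - 1)) B)"
      unfolding p_def psi D by simp
    then have "II (r * (XX * YY * p)) = (1 / fact k) * II (r * (pderiv ^^ (k - 1)) B)"
      by (simp add: II_smult)
    then show ?thesis using ortho[OF that] unfolding B_def by simp
  qed
  have G: "II (q * p) = poly q 0 * (c0 - c1) + poly q 1 * c1" if "degree q \<le> k" for q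
    by (rule main_G[OF k1 orth C0 C1 that])
  have Kpos: "real k > 0" using k1 by simp
  have c01: "c0 - c1 = 1 / (real k * (real k + 1) * (real k + 2))"
    unfolding c0_def c1_def using Kpos by (simp add: divide_simps)
  define Yc where "Yc = pcompose p YY"
  have polyYc: "poly Yc x = poly p (1 - x)" for x unfolding Yc_def by (simp add: poly_pcompose)
  have degYc: "degree Yc \<le> k" unfolding Yc_def using degp by (simp add: degree_pcompose)
  have psi_eq: "\<psi> = poly p" unfolding hpsi p_def ..
  have S1: "integral {0..1} (\<lambda>x. \<psi> x ^ 2) = 1 / (real k * (real k + 2))"
  proof -
    have "(\<lambda>x. \<psi> x ^ 2) = poly (p * p)" unfolding psi_eq by (simp add: fun_eq_iff power2_eq_square)
    then have "integral {0..1} (\<lambda>x. \<psi> x ^ 2) = II (p * p)" unfolding II_def by simp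
    also have "\<dots> = c1" using G[OF degp] p0 p1 by simp
    finally show ?thesis unfolding c1_def .
  qed
  have S2: "integral {0..1} (\<lambda>x. \<psi> x * \<psi> (1 - x)) = 1 / (real k * (real k + 1) * (real k + 2))"
  proof -
    have "(\<lambda>x. \<psi> x * \<psi> (1 - x)) = poly (Yc * p)" unfolding psi_eq by (simp add: fun_eq_iff polyYc)
    then have "integral {0..1} (\<lambda>x. \<psi> x * \<psi> (1 - x)) = II (Yc * p)" unfolding II_def by simp
    also have "\<dots> = c0 - c1" using G[OF degYc] p0 p1 by (simp add: polyYc)
    finally show ?thesis unfolding c01 .
  qed
  have S3: "\<forall>j\<in>{1..k}. integral {0..1} (\<lambda>x. x ^ j * \<psi> x) = 1 / (real k * (real k + 2))"
  proof
    fix j assume j: "j \<in> {1..k}"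
    have "(\<lambda>x. x ^ j * \<psi> x) = poly (XX ^ j * p)" unfolding psi_eq by (simp add: fun_eq_iff)
    then have "integral {0..1} (\<lambda>x. x ^ j * \<psi> x) = II (XX ^ j * p)" unfolding II_def by simp
    also have "\<dots> = c1" using G[of "XX ^ j"] j by (simp add: degree_power_eq)
    finally show "integral {0..1} (\<lambda>x. x ^ j * \<psi> x) = 1 / (real k * (real k + 2))" unfolding c1_def .
  qed
  have S4: "integral {0..1} \<psi> = 1 / (real k * (real k + 1))"
    using C0 unfolding II_def psi_eq c0_def .
  have S5: "\<forall>j\<in>{1..k}. integral {0..1} (\<lambda>x. (1 - x) ^ j * \<psi> x) = 1 / (real k * (real k + 1) * (real k + 2))"
  proof
    fix j assume j: "j \<in> {1..k}"
    have "(\<lambda>x. (1 - x) ^ j * \<psi> x) = poly (YY ^ j * p)" unfolding psi_eq by (simp add: fun_eq_iff)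
    then have "integral {0..1} (\<lambda>x. (1 - x) ^ j * \<psi> x) = II (YY ^ j * p)" unfolding II_def by simp
    also have "\<dots> = c0 - c1" using G[of "YY ^ j"] j by (simp add: degree_power_eq)
    finally show "integral {0..1} (\<lambda>x. (1 - x) ^ j * \<psi> x) = 1 / (real k * (real k + 1) * (real k + 2))"
      unfolding c01 .
  qed
  have S7: "integral {0..1} (\<lambda>x. poly (pderiv (psi_poly k)) x * \<psi> (1 - x)) = 1 / (real k + 1)"
  proof -
    define q where "q = pcompose (pderiv p) YY"
    have "(\<lambda>x. poly (pderiv (psi_poly k)) x * \<psi> (1 - x)) = poly (Yc * pderiv p)"
      unfolding psi_eq p_def[symmetric] by (simp add: fun_eq_iff polyYc)
    then have "integral {0..1} (\<lambda>x. poly (pderiv (psi_poly k)) x * \<psi> (1 - x)) = II (Yc * pderiv p)"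
      unfolding II_def by simp
    also have "\<dots> = poly (Yc * p) 1 - poly (Yc * p) 0 - II (pderiv Yc * p)" by (rule II_parts)
    also have "\<dots> = II (q * p)"
    proof -
      have "pderiv Yc = - q" unfolding Yc_def q_def pderiv_pcompose pderiv_YY by simp
      then have "II (pderiv Yc * p) = - II (q * p)" by (simp add: II_minus)
      then show ?thesis using p0 p1 by (simp add: polyYc)
    qed
    also have "\<dots> = poly (pderiv p) 1 * (c0 - c1) + poly (pderiv p) 0 * c1"
    proof -
      have "degree q \<le> k" unfolding q_def using degp
        by (simp add: degree_pcompose degree_pderiv)
      then show ?thesis using G[of q] unfolding q_def by (simp add: poly_pcompose)
    qed
    also have "\<dots> = 1 / (real k + 1)"
      unfolding pd0 pd1 c0_def c1_def using Kpos by (simp add: divide_simps) (simp add: algebra_simps power2_eq_square)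
    finally show ?thesis .
  qed
  show ?thesis using S1 S2 S3 S4 S5 S7 pd0 pd1 unfolding p_def by blast
qed

end
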